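(* Let $\mathcal C$ be an irredundant 3-SAT formula. (a) If $u,v,w,a$ are distinct variables with $\bar u v w\in\mathcal C$, then at most one of the clauses $auv$, $avw$ belongs to $\mathcal C$. (b) If $u,a,b,c$ are distinct variables with $uab\in\mathcal C$ and $\bar u ac\in\mathcal C$, then $abc\notin\mathcal C$.
   Context: A clause is a conjunction of three literals on three distinct variables, written as juxtaposition (e.g. $\bar u vw=\bar u\wedge v\wedge w$); a formula is a nonempty set of clauses. $\mathcal C$ is irredundant if every $C\in\mathcal C$ has a witness: an assignment satisfying $C$ and no other clause of $\mathcal C$. *)

theory Defs
  imports Main
begin

type_synonym 'v lit = "'v \<times> bool"
type_synonym 'v clause = "'v lit set"

definition pos :: "'v \<Rightarrow> 'v lit" where "pos x = (x, True)"
definition neg :: "'v \<Rightarrow> 'v lit" where "neg x = (x, False)"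

definition is_clause :: "'v clause \<Rightarrow> bool" where
  "is_clause C \<longleftrightarrow> (\<exists>x y z p q r. distinct [x, y, z] \<and> C = {(x, p), (y, q), (z, r)})"

definition is_formula :: "'v clause set \<Rightarrow> bool" where
  "is_formula F \<longleftrightarrow> F \<noteq> {} \<and> (\<forall>C\<in>F. is_clause C)"

text \<open>An assignment satisfies a clause (a conjunction) iff it makes every literal true.\<close>
definition sat :: "('v \<Rightarrow> bool) \<Rightarrow> 'v clause \<Rightarrow> bool" where
  "sat \<sigma> C \<longleftrightarrow> (\<forall>(x, p)\<in>C. \<sigma> x = p)"

definition witness :: "'v clause set \<Rightarrow> 'v clause \<Rightarrow> ('v \<Rightarrow> bool) \<Rightarrow> bool" where
  "witness F C \<sigma> \<longleftrightarrow> sat \<sigma> C \<and> (\<forall>D\<in>F. D \<noteq> C \<longrightarrow> \<not> sat \<sigma> D)"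

definition irredundant :: "'v clause set \<Rightarrow> bool" where
  "irredundant F \<longleftrightarrow> (\<forall>C\<in>F. \<exists>\<sigma>. witness F C \<sigma>)"

end

theory Submission
  imports Defs
begin

theorem mainTheorem7:
  fixes F :: "'v clause set"
  assumes "is_formula F" and "irredundant F"
  shows "(\<forall>u v w a. distinct [u, v, w, a] \<and> {neg u, pos v, pos w} \<in> F \<longrightarrow>
            \<not> ({pos a, pos u, pos v} \<in> F \<and> {pos a, pos v, pos w} \<in> F)) \<and>
         (\<forall>u a b c. distinct [u, a, b, c] \<and> {pos u, pos a, pos b} \<in> F \<and> {neg u, pos a, pos c} \<in> F \<longrightarrow>
            {pos a, pos b, pos c} \<notin> F)"
proof (intro conjI allI impI notI)
  fix u v w a
  assume d: "distinct [u, v, w, a] \<and> {neg u, pos v, pos w} \<in> F"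
    and h: "{pos a, pos u, pos v} \<in> F \<and> {pos a, pos v, pos w} \<in> F"
  then obtain \<sigma> where s: "witness F {pos a, pos v, pos w} \<sigma>"
    using assms(2) unfolding irredundant_def by blast
  have n1: "{neg u, pos v, pos w} \<noteq> {pos a, pos v, pos w}"
    using d by (auto simp: pos_def neg_def doubleton_eq_iff insert_eq_iff)
  have n2: "{pos a, pos u, pos v} \<noteq> {pos a, pos v, pos w}"
    using d by (auto simp: pos_def neg_def doubleton_eq_iff insert_eq_iff)
  have "\<not> sat \<sigma> {neg u, pos v, pos w}" "\<not> sat \<sigma> {pos a, pos u, pos v}"
       "sat \<sigma> {pos a, pos v, pos w}"
    using s d h n1 n2 unfolding witness_def by auto
  then show False by (auto simp: sat_def pos_def neg_def)
next
  fix u a b c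
  assume d: "distinct [u, a, b, c] \<and> {pos u, pos a, pos b} \<in> F \<and> {neg u, pos a, pos c} \<in> F"
    and h: "{pos a, pos b, pos c} \<in> F"
  then obtain \<sigma> where s: "witness F {pos a, pos b, pos c} \<sigma>"
    using assms(2) unfolding irredundant_def by blast
  have n1: "{neg u, pos a, pos c} \<noteq> {pos a, pos b, pos c}"
    using d by (auto simp: pos_def neg_def doubleton_eq_iff insert_eq_iff)
  have n2: "{pos u, pos a, pos b} \<noteq> {pos a, pos b, pos c}"
    using d by (auto simp: pos_def neg_def doubleton_eq_iff insert_eq_iff)
  have "\<not> sat \<sigma> {neg u, pos a, pos c}" "\<not> sat \<sigma> {pos u, pos a, pos b}"
       "sat \<sigma> {pos a, pos b, pos c}"
    using s d h n1 n2 unfolding witness_def by auto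
  then show False by (cases "\<sigma> u") (auto simp: sat_def pos_def neg_def)
qed

end
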